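(* Let $p$ be an odd prime and let $R$ be a nearring with identity whose additive group is $G_1=\langle a\rangle+\langle b\rangle+\langle c\rangle$ with $ap=bp=cp=0$, $a+b=b+a+c$, $a+c=c+a$, $b+c=c+b$, and suppose $a$ is the identity element of $R$. Write every element as $x=ax_1+bx_2+cx_3$ ($0\le x_i<p$), and define maps $\alpha,\beta,\gamma\colon R\to\mathbb Z_p$ by $xb=a\alpha(x)+b\beta(x)+c\gamma(x)$. Then for $x=ax_1+bx_2+cx_3$, $y=ay_1+by_2+cy_3\in R$, $$xy=a(x_1y_1+\alpha(x)y_2)+b(x_2y_1+\beta(x)y_2)+c\Big(-x_1x_2\tbinom{y_1}{2}-\alpha(x)\beta(x)\tbinom{y_2}{2}-x_2\alpha(x)y_1y_2+x_3y_1+\gamma(x)y_2+x_1\beta(x)y_3-x_2\alpha(x)y_3\Big).$$ Moreover: (0) $\alpha(0)\equiv\beta(0)\equiv\gamma(0)\equiv 0\pmod p$ if and only if $R$ is zero-symmetric; (1) $\alpha(xy)\equiv x_1\alpha(y)+\alpha(x)\beta(y)\pmod p$; (2) $\beta(xy)\equiv x_2\alpha(y)+\beta(x)\beta(y)\pmod p$; (3) $\gamma(xy)\equiv -x_1x_2\binom{\alpha(y)}{2}-\alpha(x)\beta(x)\binom{\beta(y)}{2}-x_2\alpha(x)\alpha(y)\beta(y)+x_3\alpha(y)+\gamma(x)\beta(y)+x_1\beta(x)\gamma(y)-x_2\alpha(x)\gamma(y)\pmod p$.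
   Context: A (left) nearring is a set $R$ with operations $+,\cdot$ such that $(R,+)$ is a group with neutral element $0$, $(R,\cdot)$ is a semigroup, and $x(y+z)=xy+xz$ for all $x,y,z$; it has an identity if $(R,\cdot)$ is a monoid. It is zero-symmetric if $0\cdot x=0$ for all $x\in R$. The group is written additively; $gk$ denotes $g$ added to itself $k$ times. Coefficients are read modulo $p$. *)

theory Defs
  imports "HOL-Computational_Algebra.Primes"
begin

text \<open>The additive group of the nearring is written additively and need not be
commutative (class group_add).  g k = g added to itself k times.\<close>
definition nsm :: "'a::group_add \<Rightarrow> nat \<Rightarrow> 'a" where
  "nsm g k = (((+) g) ^^ k) 0"

text \<open>Integer multiples (coefficients are read modulo p; since the generators have
additive order p this only depends on k mod p).\<close>
definition zsm :: "'a::group_add \<Rightarrow> int \<Rightarrow> 'a" where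
  "zsm g k = (if 0 \<le> k then nsm g (nat k) else - nsm g (nat (- k)))"

definition comb :: "'a::group_add \<Rightarrow> 'a \<Rightarrow> 'a \<Rightarrow> nat \<Rightarrow> nat \<Rightarrow> nat \<Rightarrow> 'a" where
  "comb a b c x1 x2 x3 = nsm a x1 + nsm b x2 + nsm c x3"

definition is_coords :: "'a::group_add \<Rightarrow> 'a \<Rightarrow> 'a \<Rightarrow> nat \<Rightarrow> 'a \<Rightarrow> nat \<times> nat \<times> nat \<Rightarrow> bool" where
  "is_coords a b c p x t = (case t of (x1, x2, x3) \<Rightarrow>
      x1 < p \<and> x2 < p \<and> x3 < p \<and> x = comb a b c x1 x2 x3)"

definition coords :: "'a::group_add \<Rightarrow> 'a \<Rightarrow> 'a \<Rightarrow> nat \<Rightarrow> 'a \<Rightarrow> nat \<times> nat \<times> nat" where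
  "coords a b c p x = (THE t. is_coords a b c p x t)"

definition alpha :: "'a::{group_add,times} \<Rightarrow> 'a \<Rightarrow> 'a \<Rightarrow> nat \<Rightarrow> 'a \<Rightarrow> nat" where
  "alpha a b c p x = fst (coords a b c p (x * b))"
definition beta :: "'a::{group_add,times} \<Rightarrow> 'a \<Rightarrow> 'a \<Rightarrow> nat \<Rightarrow> 'a \<Rightarrow> nat" where
  "beta a b c p x = fst (snd (coords a b c p (x * b)))"
definition gamma :: "'a::{group_add,times} \<Rightarrow> 'a \<Rightarrow> 'a \<Rightarrow> nat \<Rightarrow> 'a \<Rightarrow> nat" where
  "gamma a b c p x = snd (snd (coords a b c p (x * b)))"

end

theory Submission
  imports Defs
begin


lemma nsm_0[simp]: "nsm g 0 = 0" by (simp add: nsm_def)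
lemma nsm_Suc: "nsm g (Suc n) = g + nsm g n" by (simp add: nsm_def)
lemma nsm_add: "nsm g (m + n) = nsm g m + nsm g n"
  by (induction m) (simp_all add: nsm_Suc add.assoc)
lemma nsm_zero_elem[simp]: "nsm (0::'a::group_add) n = 0"
  by (induction n) (simp_all add: nsm_Suc)
lemma nsm_mult_p: "nsm g p = 0 \<Longrightarrow> nsm g (q * p) = 0"
  by (induction q) (simp_all add: nsm_add)
lemma nsm_mod: assumes "nsm g p = 0" shows "nsm g n = nsm g (n mod p)"
proof -
  have "nsm g n = nsm g ((n div p) * p + n mod p)" by simp
  also have "\<dots> = nsm g (n mod p)" by (simp only: nsm_add nsm_mult_p[OF assms]) simp
  finally show ?thesis .
qed
lemma nsm_comm: "g + h = h + g \<Longrightarrow> nsm g n + h = h + nsm g n"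
proof (induction n)
  case (Suc n)
  have "nsm g (Suc n) + h = g + (nsm g n + h)" by (simp add: nsm_Suc add.assoc)
  also have "\<dots> = g + h + nsm g n" by (metis Suc.IH Suc.prems add.assoc)
  also have "\<dots> = h + nsm g (Suc n)" by (metis Suc.prems add.assoc nsm_Suc)
  finally show ?case .
qed simp
lemma nsm_comm_self: "nsm g m + nsm g n = nsm g n + nsm g m"
  by (metis nsm_add add.commute)

lemma zsm_rep: assumes p: "p > 0" and g: "nsm g p = 0"
  shows "zsm g k = nsm g (nat (k mod int p))"
proof (cases "0 \<le> k")
  case True
  then have "nat (k mod int p) = nat k mod p" by (simp add: nat_mod_distrib)
  then show ?thesis using True nsm_mod[OF g] by (simp add: zsm_def)
next
  case False
  have "int ((nat (k mod int p) + nat (- k)) mod p) = (k mod int p - k) mod int p"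
    using False p by (simp add: zmod_int)
  also have "\<dots> = 0" by (simp add: mod_diff_left_eq)
  finally have 0: "(nat (k mod int p) + nat (- k)) mod p = 0" by simp
  have "nsm g (nat (-k)) + nsm g (nat (k mod int p)) = 0"
    using nsm_mod[OF g, of "nat (k mod int p) + nat (- k)"] 0
    by (simp add: nsm_add nsm_comm_self)
  then have "- nsm g (nat (-k)) = nsm g (nat (k mod int p))" by (rule minus_unique)
  then show ?thesis using False by (simp add: zsm_def)
qed

lemma zsm_int: "zsm g (int n) = nsm g n" by (simp add: zsm_def)

lemma zsm_cong: assumes "p > 0" "nsm g p = 0" "k mod int p = k' mod int p"
  shows "zsm g k = zsm g k'"
  using assms by (simp add: zsm_rep)

lemma zsm_add: assumes p: "p > 0" and g: "nsm g p = 0"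
  shows "zsm g (m + n) = zsm g m + zsm g n"
proof -
  have "int ((nat (m mod int p) + nat (n mod int p)) mod p) = (m + n) mod int p"
    using p by (simp add: zmod_int mod_add_eq)
  then have e: "nat ((m + n) mod int p) = (nat (m mod int p) + nat (n mod int p)) mod p"
    by linarith
  show ?thesis
    using nsm_mod[OF g, of "nat (m mod int p) + nat (n mod int p)"]
    by (simp add: zsm_rep[OF p g] e nsm_add)
qed

lemma zsm_0[simp]: "zsm g 0 = 0" by (simp add: zsm_def)

lemma zsm_comm: assumes "p > 0" "nsm g p = 0" "g + h = h + g"
  shows "zsm g k + h = h + zsm g k"
  using assms by (simp add: zsm_rep nsm_comm)

lemma zsm_neg: assumes p: "p > 0" and g: "nsm g p = 0"
  shows "- zsm g k = zsm g (- k)"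
  by (rule minus_unique) (simp add: zsm_add[OF p g, symmetric])



locale heis =
  fixes a b c :: "'r::{group_add, monoid_mult}" and p :: nat
  assumes p_pos: "p > 0" and pa: "nsm a p = 0" and pb: "nsm b p = 0" and pc: "nsm c p = 0"
    and ab: "a + b = b + a + c" and ac: "a + c = c + a" and bc: "b + c = c + b"
    and ur: "\<And>x :: 'r. \<exists>!t. is_coords a b c p x t"
begin

definition E :: "int \<Rightarrow> int \<Rightarrow> int \<Rightarrow> 'r" where
  "E u v w = zsm a u + zsm b v + zsm c w"

lemmas za = zsm_add[OF p_pos pa] and zb = zsm_add[OF p_pos pb] and zc = zsm_add[OF p_pos pc]

lemma comb_E: "comb a b c x1 x2 x3 = E (int x1) (int x2) (int x3)"
  by (simp add: comb_def E_def zsm_int)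

lemma coords_prop: "is_coords a b c p x (coords a b c p x)"
  unfolding coords_def by (rule theI') (rule ur)

lemma coords_rep: obtains t1 t2 t3 where "coords a b c p x = (t1, t2, t3)"
  "t1 < p" "t2 < p" "t3 < p" "x = E (int t1) (int t2) (int t3)"
  using coords_prop[of x] by (cases "coords a b c p x") (auto simp: is_coords_def comb_E)

lemma central: "c + x = x + c"
proof -
  obtain t1 t2 t3 where x: "x = nsm a t1 + nsm b t2 + nsm c t3"
    using coords_prop[of x] by (cases "coords a b c p x") (auto simp: is_coords_def comb_def)
  have 1: "c + nsm a t1 = nsm a t1 + c" using nsm_comm[OF ac] by simp
  have 2: "c + nsm b t2 = nsm b t2 + c" using nsm_comm[OF bc] by simp
  have 3: "c + nsm c t3 = nsm c t3 + c" using nsm_comm[of c c] by simp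
  show ?thesis unfolding x by (metis 1 2 3 add.assoc)
qed

lemma zc_central: "zsm c k + x = x + zsm c k"
  by (rule zsm_comm[OF p_pos pc central])

lemma nc_central: "nsm c k + x = x + nsm c k"
  by (rule nsm_comm[OF central])

lemma comm1: "b + nsm a u + nsm c u = nsm a u + b"
proof (induction u)
  case (Suc u)
  have "b + nsm a (Suc u) + nsm c (Suc u) = b + a + (nsm a u + c) + nsm c u"
    by (simp add: nsm_Suc add.assoc)
  also have "\<dots> = b + a + c + nsm a u + nsm c u" by (simp add: central[of "nsm a u"] add.assoc)
  also have "\<dots> = a + (b + nsm a u + nsm c u)" by (metis ab add.assoc)
  also have "\<dots> = nsm a (Suc u) + b" by (metis Suc.IH nsm_Suc add.assoc)
  finally show ?case .
qed simp

lemma comm_nat: "nsm b v + nsm a u + nsm c (u * v) = nsm a u + nsm b v"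
proof (induction v)
  case (Suc v)
  have "nsm b (Suc v) + nsm a u + nsm c (u * Suc v)
      = b + (nsm b v + nsm a u + nsm c (u * v)) + nsm c u"
    by (simp add: nsm_Suc nsm_add add.assoc nc_central[of u "nsm c (u*v)"])
  also have "\<dots> = b + nsm a u + (nsm b v + nsm c u)" by (metis Suc.IH add.assoc)
  also have "\<dots> = (b + nsm a u + nsm c u) + nsm b v" by (simp add: nc_central[of u "nsm b v"] add.assoc)
  also have "\<dots> = nsm a u + nsm b (Suc v)" by (metis comm1 nsm_Suc add.assoc)
  finally show ?case .
qed simp

lemma comm_int: "zsm b v + zsm a u = zsm a u + zsm b v + zsm c (- (u * v))"
proof -
  define U where "U = nat (u mod int p)"
  define V where "V = nat (v mod int p)"
  have "int (U * V) mod int p = (u * v) mod int p"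
    using p_pos by (simp add: U_def V_def mod_mult_eq)
  then have cuv: "zsm c (u * v) = nsm c (U * V)"
    using zsm_cong[OF p_pos pc, of "u * v" "int (U*V)"] zsm_int[of c "U*V"] by simp
  have "zsm b v + zsm a u + zsm c (u * v) = zsm a u + zsm b v"
    using comm_nat[of V U] by (simp add: zsm_rep[OF p_pos pa] zsm_rep[OF p_pos pb] cuv U_def V_def mult.commute)
  then have "zsm b v + zsm a u = zsm a u + zsm b v - zsm c (u * v)"
    by (metis add_diff_cancel)
  then show ?thesis by (simp add: zsm_neg[OF p_pos pc] diff_conv_add_uminus)
qed

lemma E_add: "E u v w + E u' v' w' = E (u + u') (v + v') (w + w' - v * u')"
proof -
  have "E u v w + E u' v' w' = zsm a u + (zsm b v + zsm a u') + zsm b v' + (zsm c w + zsm c w')"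
    unfolding E_def by (metis add.assoc zc_central)
  also have "\<dots> = zsm a u + zsm a u' + zsm b v + zsm b v' + (zsm c (- (u' * v)) + zsm c w + zsm c w')"
    unfolding comm_int by (simp add: add.assoc zc_central[of "- (u' * v)" "zsm b v'"])
  also have "\<dots> = zsm a (u + u') + zsm b (v + v') + zsm c (- (u' * v) + w + w')"
    by (simp only: za zb zc add.assoc)
  also have "- (u' * v) + w + w' = w + w' - v * u'" by (simp add: algebra_simps)
  finally show ?thesis unfolding E_def .
qed

end


context heis begin

lemma E_zero: "E 0 0 0 = 0" by (simp add: E_def)

lemma E_cong: "u mod int p = u' mod int p \<Longrightarrow> v mod int p = v' mod int p \<Longrightarrow>
  w mod int p = w' mod int p \<Longrightarrow> E u v w = E u' v' w'"
  unfolding E_def using zsm_cong[OF p_pos pa, of u u'] zsm_cong[OF p_pos pb, of v v'] zsm_cong[OF p_pos pc, of w w'] by simp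

lemma coords_E: "coords a b c p (E u v w) = (nat (u mod int p), nat (v mod int p), nat (w mod int p))"
proof -
  have "is_coords a b c p (E u v w) (nat (u mod int p), nat (v mod int p), nat (w mod int p))"
    unfolding is_coords_def using p_pos
    by (auto simp: comb_E nat_less_iff intro!: E_cong)
  then show ?thesis unfolding coords_def by (rule the1_equality[OF ur])
qed

lemma choose2_Suc: "Suc n choose 2 = (n choose 2) + n"
  by (simp add: numeral_2_eq_2)

lemma nsm_E: "nsm (E u v w) n = E (int n * u) (int n * v) (int n * w - u * v * int (n choose 2))"
proof (induction n)
  case 0 then show ?case by (simp add: E_zero numeral_2_eq_2)
next
  case (Suc n)
  have "nsm (E u v w) (Suc n) = E u v w + E (int n * u) (int n * v) (int n * w - u * v * int (n choose 2))"
    by (simp add: nsm_Suc Suc)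
  also have "\<dots> = E (u + int n * u) (v + int n * v) (w + (int n * w - u * v * int (n choose 2)) - v * (int n * u))"
    by (rule E_add)
  also have "\<dots> = E (int (Suc n) * u) (int (Suc n) * v) (int (Suc n) * w - u * v * int (Suc n choose 2))"
    by (simp add: choose2_Suc algebra_simps)
  finally show ?case .
qed

lemma E_diff: "- E u v w + E u v w' = E 0 0 (w' - w)"
proof -
  have "E u v w' = E u v w + E 0 0 (w' - w)" by (simp add: E_add)
  then show ?thesis by simp
qed

end


locale heis_m = heis a b c p for a b c :: "'r::{group_add, monoid_mult}" and p +
  assumes ld: "\<And>x y z :: 'r. x * (y + z) = x * y + x * z"
    and a1: "a = 1"
begin

lemma mul0: "(x::'r) * 0 = 0"
proof -
  have "x * 0 = x * 0 + x * 0" by (metis add_0 ld)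
  then show ?thesis by (metis add.right_neutral add_left_cancel)
qed

lemma mul_nsm: "(x::'r) * nsm g n = nsm (x * g) n"
  by (induction n) (simp_all add: mul0 nsm_Suc ld)

lemma mul_neg: "(x::'r) * (- z) = - (x * z)"
proof -
  have "x * (- z) + x * z = x * (- z + z)" by (rule ld[symmetric])
  then have "x * (- z) + x * z = 0" by (simp add: mul0)
  then show ?thesis by (simp add: eq_neg_iff_add_eq_0)
qed

lemma xb: "(x::'r) * b = E (int (alpha a b c p x)) (int (beta a b c p x)) (int (gamma a b c p x))"
  "alpha a b c p x < p" "beta a b c p x < p" "gamma a b c p x < p"
proof -
  obtain t1 t2 t3 where t: "coords a b c p (x * b) = (t1, t2, t3)"
    "t1 < p" "t2 < p" "t3 < p" "x * b = E (int t1) (int t2) (int t3)"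
    by (rule coords_rep)
  have "alpha a b c p x = t1" "beta a b c p x = t2" "gamma a b c p x = t3"
    unfolding alpha_def beta_def gamma_def t(1) by simp_all
  then show "(x::'r) * b = E (int (alpha a b c p x)) (int (beta a b c p x)) (int (gamma a b c p x))"
    "alpha a b c p x < p" "beta a b c p x < p" "gamma a b c p x < p"
    using t by simp_all
qed

lemma c_eq: "c = - (b + a) + (a + b)"
  by (simp only: ab minus_add_cancel)

lemma xc: assumes x: "(x::'r) = E X1 X2 X3" and xb: "x * b = E A B G"
  shows "x * c = E 0 0 (X1 * B - X2 * A)"
proof -
  have "x * c = x * (- (b + a) + (a + b))" by (subst c_eq) (rule refl)
  also have "\<dots> = - (x * b + x * a) + (x * a + x * b)" by (simp only: ld mul_neg)
  also have "x * a = x" by (simp add: a1)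
  also have "x * b + x = E A B G + E X1 X2 X3" using xb x by metis
  also have "\<dots> = E (X1 + A) (X2 + B) (G + X3 - B * X1)"
    by (simp add: E_add algebra_simps)
  also have "x + x * b = E X1 X2 X3 + E A B G" using x xb by metis
  also have "\<dots> = E (X1 + A) (X2 + B) (X3 + G - X2 * A)"
    by (simp add: E_add)
  also have "- E (X1 + A) (X2 + B) (G + X3 - B * X1) + E (X1 + A) (X2 + B) (X3 + G - X2 * A)
     = E 0 0 (X1 * B - X2 * A)"
    by (simp add: E_diff algebra_simps)
  finally show ?thesis .
qed
end

context heis_m begin

lemma main:
  fixes x1 x2 x3 y1 y2 y3 :: nat
  shows "comb a b c x1 x2 x3 * comb a b c y1 y2 y3 =
    E (int x1 * int y1 + int (alpha a b c p (comb a b c x1 x2 x3)) * int y2)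
      (int x2 * int y1 + int (beta a b c p (comb a b c x1 x2 x3)) * int y2)
      (- int x1 * int x2 * int (y1 choose 2)
       - int (alpha a b c p (comb a b c x1 x2 x3)) * int (beta a b c p (comb a b c x1 x2 x3)) * int (y2 choose 2)
       - int x2 * int (alpha a b c p (comb a b c x1 x2 x3)) * int y1 * int y2
       + int x3 * int y1 + int (gamma a b c p (comb a b c x1 x2 x3)) * int y2
       + int x1 * int (beta a b c p (comb a b c x1 x2 x3)) * int y3
       - int x2 * int (alpha a b c p (comb a b c x1 x2 x3)) * int y3)"
proof -
  define x where "x = comb a b c x1 x2 x3"
  define A where "A = int (alpha a b c p x)"
  define B where "B = int (beta a b c p x)"
  define G where "G = int (gamma a b c p x)"
  have xE: "x = E (int x1) (int x2) (int x3)" unfolding x_def by (rule comb_E)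
  have hb: "x * b = E A B G" unfolding A_def B_def G_def by (rule xb(1))
  have hc: "x * c = E 0 0 (int x1 * B - int x2 * A)" by (rule xc[OF xE hb])
  have "x * comb a b c y1 y2 y3 = x * nsm a y1 + x * nsm b y2 + x * nsm c y3"
    unfolding comb_def by (simp only: ld)
  also have "\<dots> = nsm x y1 + nsm (E A B G) y2 + nsm (E 0 0 (int x1 * B - int x2 * A)) y3"
    by (simp only: mul_nsm a1 mult_1_right hb hc)
  also have "\<dots> = E (int y1 * int x1) (int y1 * int x2) (int y1 * int x3 - int x1 * int x2 * int (y1 choose 2))
     + E (int y2 * A) (int y2 * B) (int y2 * G - A * B * int (y2 choose 2))
     + E 0 0 (int y3 * (int x1 * B - int x2 * A))"
    unfolding xE nsm_E by simp
  also have "\<dots> = E (int x1 * int y1 + A * int y2) (int x2 * int y1 + B * int y2)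
      (- int x1 * int x2 * int (y1 choose 2) - A * B * int (y2 choose 2)
       - int x2 * A * int y1 * int y2 + int x3 * int y1 + G * int y2
       + int x1 * B * int y3 - int x2 * A * int y3)"
    unfolding E_add by (simp add: algebra_simps)
  finally show ?thesis unfolding x_def A_def B_def G_def .
qed

end

context heis_m begin

lemma part3:
  fixes x1 x2 x3 :: nat and y :: 'r
  defines "x \<equiv> comb a b c x1 x2 x3"
  shows "int (alpha a b c p (x * y)) = (int x1 * int (alpha a b c p y) + int (alpha a b c p x) * int (beta a b c p y)) mod int p
    \<and> int (beta a b c p (x * y)) = (int x2 * int (alpha a b c p y) + int (beta a b c p x) * int (beta a b c p y)) mod int p
    \<and> int (gamma a b c p (x * y)) =
      (- int x1 * int x2 * int (alpha a b c p y choose 2)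
       - int (alpha a b c p x) * int (beta a b c p x) * int (beta a b c p y choose 2)
       - int x2 * int (alpha a b c p x) * int (alpha a b c p y) * int (beta a b c p y)
       + int x3 * int (alpha a b c p y) + int (gamma a b c p x) * int (beta a b c p y)
       + int x1 * int (beta a b c p x) * int (gamma a b c p y)
       - int x2 * int (alpha a b c p x) * int (gamma a b c p y)) mod int p"
proof -
  have yb: "y * b = comb a b c (alpha a b c p y) (beta a b c p y) (gamma a b c p y)"
    by (simp add: comb_E xb(1))
  have e: "x * y * b = x * comb a b c (alpha a b c p y) (beta a b c p y) (gamma a b c p y)"
    by (simp add: mult.assoc yb)
  have c: "coords a b c p (x * y * b) = coords a b c p (x * comb a b c (alpha a b c p y) (beta a b c p y) (gamma a b c p y))"
    using e by simp
  note c = c[unfolded x_def main coords_E]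
  have ab: "alpha a b c p (x * y) = fst (coords a b c p (x * y * b))"
    "beta a b c p (x * y) = fst (snd (coords a b c p (x * y * b)))"
    "gamma a b c p (x * y) = snd (snd (coords a b c p (x * y * b)))"
    by (simp_all add: alpha_def beta_def gamma_def)
  show ?thesis unfolding ab unfolding x_def c using p_pos by simp
qed

end

theorem lemma5:
  fixes p :: nat and a b c :: "'r::{group_add, monoid_mult}"
  assumes "prime p" and "odd p"
    and left_distrib: "\<And>x y z :: 'r. x * (y + z) = x * y + x * z"
    and "nsm a p = 0" and "nsm b p = 0" and "nsm c p = 0"
    and "a + b = b + a + c" and "a + c = c + a" and "b + c = c + b"
    and unique_repr: "\<And>x :: 'r. \<exists>!t. is_coords a b c p x t"
    and a_identity: "a = 1"
  shows
   "(\<forall>x1<p. \<forall>x2<p. \<forall>x3<p. \<forall>y1<p. \<forall>y2<p. \<forall>y3<p.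
      let x = comb a b c x1 x2 x3; y = comb a b c y1 y2 y3;
          X1 = int x1; X2 = int x2; X3 = int x3; Y1 = int y1; Y2 = int y2; Y3 = int y3;
          A = int (alpha a b c p x); B = int (beta a b c p x); G = int (gamma a b c p x)
      in x * y = zsm a (X1 * Y1 + A * Y2) + zsm b (X2 * Y1 + B * Y2)
                 + zsm c (- X1 * X2 * int (y1 choose 2) - A * B * int (y2 choose 2)
                          - X2 * A * Y1 * Y2 + X3 * Y1 + G * Y2 + X1 * B * Y3 - X2 * A * Y3))
    \<and> ((int (alpha a b c p 0) mod int p = 0 \<and> int (beta a b c p 0) mod int p = 0
         \<and> int (gamma a b c p 0) mod int p = 0) \<longleftrightarrow> (\<forall>x :: 'r. 0 * x = 0))
    \<and> (\<forall>x1<p. \<forall>x2<p. \<forall>x3<p. \<forall>y :: 'r.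
      let x = comb a b c x1 x2 x3;
          X1 = int x1; X2 = int x2; X3 = int x3;
          A = int (alpha a b c p x); B = int (beta a b c p x); G = int (gamma a b c p x);
          Ay = int (alpha a b c p y); By = int (beta a b c p y); Gy = int (gamma a b c p y)
      in int (alpha a b c p (x * y)) mod int p = (X1 * Ay + A * By) mod int p
       \<and> int (beta a b c p (x * y)) mod int p = (X2 * Ay + B * By) mod int p
       \<and> int (gamma a b c p (x * y)) mod int p =
           (- X1 * X2 * int (alpha a b c p y choose 2) - A * B * int (beta a b c p y choose 2)
            - X2 * A * Ay * By + X3 * Ay + G * By + X1 * B * Gy - X2 * A * Gy) mod int p)"
proof -
  have p0: "p > 0" using assms(1) prime_gt_0_nat by blast
  interpret H: heis_m a b c p
    by unfold_locales (use p0 assms in auto)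
  have P1: "\<forall>x1<p. \<forall>x2<p. \<forall>x3<p. \<forall>y1<p. \<forall>y2<p. \<forall>y3<p.
      let x = comb a b c x1 x2 x3; y = comb a b c y1 y2 y3;
          X1 = int x1; X2 = int x2; X3 = int x3; Y1 = int y1; Y2 = int y2; Y3 = int y3;
          A = int (alpha a b c p x); B = int (beta a b c p x); G = int (gamma a b c p x)
      in x * y = zsm a (X1 * Y1 + A * Y2) + zsm b (X2 * Y1 + B * Y2)
                 + zsm c (- X1 * X2 * int (y1 choose 2) - A * B * int (y2 choose 2)
                          - X2 * A * Y1 * Y2 + X3 * Y1 + G * Y2 + X1 * B * Y3 - X2 * A * Y3)"
    unfolding Let_def H.main H.E_def by blast
  have c0: "comb a b c 0 0 0 = 0" by (simp add: comb_def)
  have P0: "(int (alpha a b c p 0) mod int p = 0 \<and> int (beta a b c p 0) mod int p = 0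
         \<and> int (gamma a b c p 0) mod int p = 0) \<longleftrightarrow> (\<forall>x :: 'r. 0 * x = 0)"
  proof
    assume h: "int (alpha a b c p 0) mod int p = 0 \<and> int (beta a b c p 0) mod int p = 0
         \<and> int (gamma a b c p 0) mod int p = 0"
    have "alpha a b c p 0 = 0" "beta a b c p 0 = 0" "gamma a b c p 0 = 0"
      using h H.xb(2,3,4)[of 0] by (simp_all add: zmod_int)
    show "\<forall>x :: 'r. 0 * x = 0"
    proof
      fix y :: 'r
      obtain t1 t2 t3 where t: "coords a b c p y = (t1, t2, t3)"
        "t1 < p" "t2 < p" "t3 < p" "y = H.E (int t1) (int t2) (int t3)"
        by (rule H.coords_rep)
      have "0 * y = comb a b c 0 0 0 * comb a b c t1 t2 t3" using t(5) by (simp add: H.E_zero H.comb_E)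
      also have "\<dots> = 0" unfolding H.main unfolding c0 using \<open>alpha a b c p 0 = 0\<close> \<open>beta a b c p 0 = 0\<close> \<open>gamma a b c p 0 = 0\<close>
        by (simp add: H.E_zero)
      finally show "0 * y = 0" .
    qed
  next
    assume "\<forall>x :: 'r. 0 * x = 0"
    then have "0 * b = H.E 0 0 0" by (simp add: H.E_zero)
    then have "coords a b c p (0 * b) = (0, 0, 0)" by (simp add: H.coords_E)
    then show "int (alpha a b c p 0) mod int p = 0 \<and> int (beta a b c p 0) mod int p = 0
         \<and> int (gamma a b c p 0) mod int p = 0" by (simp add: alpha_def beta_def gamma_def)
  qed
  have P3: "\<forall>x1<p. \<forall>x2<p. \<forall>x3<p. \<forall>y :: 'r.
      let x = comb a b c x1 x2 x3;
          X1 = int x1; X2 = int x2; X3 = int x3;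
          A = int (alpha a b c p x); B = int (beta a b c p x); G = int (gamma a b c p x);
          Ay = int (alpha a b c p y); By = int (beta a b c p y); Gy = int (gamma a b c p y)
      in int (alpha a b c p (x * y)) mod int p = (X1 * Ay + A * By) mod int p
       \<and> int (beta a b c p (x * y)) mod int p = (X2 * Ay + B * By) mod int p
       \<and> int (gamma a b c p (x * y)) mod int p =
           (- X1 * X2 * int (alpha a b c p y choose 2) - A * B * int (beta a b c p y choose 2)
            - X2 * A * Ay * By + X3 * Ay + G * By + X1 * B * Gy - X2 * A * Gy) mod int p"
  proof (intro allI impI)
    fix x1 x2 x3 :: nat and y :: 'r
    show "let x = comb a b c x1 x2 x3;
          X1 = int x1; X2 = int x2; X3 = int x3;
          A = int (alpha a b c p x); B = int (beta a b c p x); G = int (gamma a b c p x);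
          Ay = int (alpha a b c p y); By = int (beta a b c p y); Gy = int (gamma a b c p y)
      in int (alpha a b c p (x * y)) mod int p = (X1 * Ay + A * By) mod int p
       \<and> int (beta a b c p (x * y)) mod int p = (X2 * Ay + B * By) mod int p
       \<and> int (gamma a b c p (x * y)) mod int p =
           (- X1 * X2 * int (alpha a b c p y choose 2) - A * B * int (beta a b c p y choose 2)
            - X2 * A * Ay * By + X3 * Ay + G * By + X1 * B * Gy - X2 * A * Gy) mod int p"
      unfolding Let_def using H.part3[of x1 x2 x3 y] by simp
  qed
  show ?thesis using P1 P0 P3 by blast
qed


end
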